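(* Let $(X,d)$ be a complete metric space and let $T:X\to \mathcal{CB}(X)$ be a multi-valued mapping such that \[ \mathcal{H}(Tx,Ty)\leq \eta(d(x,y)) \] for all $x,y\in X$, where $\eta:[0,\infty)\to[0,\infty)$ is a lower semicontinuous map such that $\eta(t)<t$ for all $t\in(0,+\infty)$ and $t\mapsto\frac{\eta(t)}{t}$ is non-decreasing on $(0,+\infty)$. Then $T$ has a fixed point, i.e., there exists $v\in X$ with $v\in Tv$.
   Context: $\mathcal{CB}(X)$ denotes the family of all nonempty closed and bounded subsets of $X$, and $\mathcal{H}$ is the Hausdorff metric on $\mathcal{CB}(X)$ induced by $d$: $\mathcal{H}(A,B)=\max\{\sup_{x\in B}d(x,A),\ \sup_{x\in A}d(x,B)\}$. *)

theory Defs
  imports "HOL-Analysis.Analysis"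
begin

text \<open>Hausdorff metric on nonempty closed bounded subsets, as in the paper:
  H(A,B) = max (sup_{x in B} d(x,A)) (sup_{x in A} d(x,B)).
  For nonempty bounded sets both suprema are finite reals.\<close>
definition hausdorff_metric :: "'a::metric_space set \<Rightarrow> 'a set \<Rightarrow> real" where
  "hausdorff_metric A B = max (SUP x\<in>B. infdist x A) (SUP x\<in>A. infdist x B)"

definition lsc_on_nonneg :: "(real \<Rightarrow> real) \<Rightarrow> bool" where
  "lsc_on_nonneg \<eta> \<longleftrightarrow> (\<forall>t\<ge>0. \<forall>e>0. \<exists>\<delta>>0. \<forall>s\<ge>0. \<bar>s - t\<bar> < \<delta> \<longrightarrow> \<eta> t - e < \<eta> s)"

end

theory Submission
  imports Defs
begin

lemma geo_cauchy:
  fixes z :: "nat \<Rightarrow> 'a::metric_space"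
  assumes q: "0 \<le> q" "q < 1" and d: "\<And>n. dist (z n) (z (Suc n)) \<le> C * q^n"
  shows "Cauchy z"
proof -
  have C: "C \<ge> 0" using d[of 0] zero_le_dist[of "z 0" "z (Suc 0)"] unfolding power_0 mult_1_right by linarith
  have sumb: "dist (z m) (z (m+k)) \<le> (\<Sum>i<k. dist (z (m+i)) (z (Suc (m+i))))" for m k
  proof (induction k)
    case 0 then show ?case by simp
  next
    case (Suc k)
    have "dist (z m) (z (m + Suc k)) \<le> dist (z m) (z (m+k)) + dist (z (m+k)) (z (Suc (m+k)))"
      by (simp add: dist_triangle)
    with Suc show ?case by simp
  qed
  have bnd: "dist (z m) (z (m+k)) \<le> C * q^m / (1 - q)" for m k
  proof -
    have "(\<Sum>i<k. dist (z (m+i)) (z (Suc (m+i)))) \<le> (\<Sum>i<k. C * q^m * q^i)"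
      by (rule sum_mono) (metis d power_add mult.assoc)
    also have "\<dots> = C * q^m * (\<Sum>i<k. q^i)" by (simp add: sum_distrib_left)
    also have "(\<Sum>i<k. q^i) = (1 - q^k) / (1 - q)" using q by (simp add: sum_gp_strict)
    also have "(1 - q^k) / (1 - q) \<le> 1 / (1 - q)" using q
      by (intro divide_right_mono) auto
    finally have "(\<Sum>i<k. dist (z (m+i)) (z (Suc (m+i)))) \<le> C * q^m * (1 / (1 - q))"
      using C q by (simp add: mult_left_mono)
    with sumb[of m k] show ?thesis by simp
  qed
  show ?thesis
  proof (rule metric_CauchyI)
    fix e :: real assume e: "0 < e"
    have "(\<lambda>n. C * q^n / (1 - q)) \<longlonglongrightarrow> C * 0 / (1 - q)"
      using q by (intro tendsto_intros LIMSEQ_power_zero) auto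
    then have "eventually (\<lambda>n. C * q^n / (1 - q) < e) sequentially"
      using e by (simp add: order_tendstoD(2))
    then obtain M where M: "\<And>n. n \<ge> M \<Longrightarrow> C * q^n / (1 - q) < e"
      by (auto simp: eventually_sequentially)
    have "dist (z m) (z n) < e" if "m \<ge> M" "n \<ge> M" for m n
    proof (cases "m \<le> n")
      case True
      then obtain k where "n = m + k" using le_Suc_ex by blast
      then show ?thesis using bnd[of m k] M[OF that(1)] by simp
    next
      case False
      then obtain k where "m = n + k" using le_Suc_ex[of n m] by auto
      then show ?thesis using bnd[of n k] M[OF that(2)] by (simp add: dist_commute)
    qed
    then show "\<exists>M. \<forall>m\<ge>M. \<forall>n\<ge>M. dist (z m) (z n) < e" by blast
  qed
qed

lemma infdist_le_haus:
  fixes A B :: "'a::metric_space set"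
  assumes "y \<in> A" "bounded A" "B \<noteq> {}"
  shows "infdist y B \<le> hausdorff_metric A B"
proof -
  obtain b where b: "b \<in> B" using assms by blast
  obtain e where e: "\<forall>x\<in>A. dist b x \<le> e" using assms(2) bounded_any_center[of A b] by blast
  have "bdd_above ((\<lambda>x. infdist x B) ` A)"
  proof (rule bdd_aboveI2)
    fix x assume "x \<in> A"
    then show "infdist x B \<le> e" using e b infdist_le[OF b, of x]
      by (metis dist_commute order_trans)
  qed
  then have "infdist y B \<le> (SUP x\<in>A. infdist x B)" using assms(1) by (rule cSUP_upper2) simp
  then show ?thesis unfolding hausdorff_metric_def by simp
qed

theorem mainTheorem3:
  fixes T :: "'a::complete_space \<Rightarrow> 'a set"
    and \<eta> :: "real \<Rightarrow> real"
  assumes CB: "\<And>x. T x \<noteq> {} \<and> closed (T x) \<and> bounded (T x)"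
    and eta_nonneg: "\<And>t. t \<ge> 0 \<Longrightarrow> \<eta> t \<ge> 0"
    and eta_lsc: "lsc_on_nonneg \<eta>"
    and eta_less: "\<And>t. t > 0 \<Longrightarrow> \<eta> t < t"
    and eta_mono: "\<And>s t. 0 < s \<Longrightarrow> s \<le> t \<Longrightarrow> \<eta> s / s \<le> \<eta> t / t"
    and contr: "\<And>x y. hausdorff_metric (T x) (T y) \<le> \<eta> (dist x y)"
  shows "\<exists>v. v \<in> T v"
proof (rule ccontr)
  assume "\<not> (\<exists>v. v \<in> T v)"
  then have nofix: "\<And>v. v \<notin> T v" by blast
  obtain x0 :: 'a where True by blast
  obtain x1 where x1: "x1 \<in> T x0" using CB by blast
  define R where "R = dist x0 x1"
  have R: "R > 0" unfolding R_def using x1 nofix by (metis zero_less_dist_iff)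
  define k where "k = \<eta> R / R"
  have k1: "k < 1" using eta_less[OF R] R by (simp add: k_def)
  have k0: "k \<ge> 0" using eta_nonneg[of R] R by (simp add: k_def)
  define q where "q = (1 + k) / 2"
  have q: "0 \<le> q" "q < 1" "k < q" using k0 k1 by (auto simp: q_def)
  have etak: "\<eta> t \<le> k * t" if "0 < t" "t \<le> R" for t
  proof -
    have "\<eta> t / t \<le> k" using eta_mono[OF that] by (simp add: k_def)
    then show ?thesis using that by (simp add: divide_le_eq mult.commute)
  qed
  have step: "\<exists>z. z \<in> T y \<and> 0 < dist y z \<and> dist y z \<le> q * dist x y"
    if xy: "y \<in> T x" "0 < dist x y" "dist x y \<le> R" for x y
  proof -
    have "infdist y (T y) \<le> hausdorff_metric (T x) (T y)"
      using infdist_le_haus[OF xy(1)] CB by blast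
    also have "\<dots> \<le> \<eta> (dist x y)" by (rule contr)
    also have "\<dots> \<le> k * dist x y" using etak xy by blast
    also have "\<dots> < q * dist x y" using q xy by simp
    finally have "infdist y (T y) < q * dist x y" .
    then have "(INF a\<in>T y. dist y a) < q * dist x y" using CB by (simp add: infdist_notempty)
    then obtain z where z: "z \<in> T y" "dist y z < q * dist x y"
      using cINF_less_iff[of "T y" "\<lambda>a. dist y a"] CB[of y] bdd_belowI2[of "T y" 0 "\<lambda>a. dist y a"]
      by auto
    have "z \<noteq> y" using z nofix by blast
    then show ?thesis using z by auto
  qed
  define g where "g = (\<lambda>p::'a\<times>'a. (snd p, SOME z. z \<in> T (snd p) \<and> 0 < dist (snd p) z
       \<and> dist (snd p) z \<le> q * dist (fst p) (snd p)))"
  define p where "p n = (g ^^ n) (x0, x1)" for n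
  have inv: "snd (p n) \<in> T (fst (p n)) \<and> 0 < dist (fst (p n)) (snd (p n))
      \<and> dist (fst (p n)) (snd (p n)) \<le> q^n * R" for n
  proof (induction n)
    case 0 then show ?case using x1 R by (simp add: p_def R_def)
  next
    case (Suc n)
    have pS: "p (Suc n) = g (p n)" by (simp add: p_def)
    have "q^n * R \<le> 1 * R" using q R by (intro mult_right_mono power_le_one) auto
    then have "\<exists>z. z \<in> T (snd (p n)) \<and> 0 < dist (snd (p n)) z
       \<and> dist (snd (p n)) z \<le> q * dist (fst (p n)) (snd (p n))"
      using Suc step by auto
    from someI_ex[OF this]
    have "snd (p (Suc n)) \<in> T (fst (p (Suc n))) \<and> 0 < dist (fst (p (Suc n))) (snd (p (Suc n)))
       \<and> dist (fst (p (Suc n))) (snd (p (Suc n))) \<le> q * dist (fst (p n)) (snd (p n))"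
      unfolding pS g_def by simp
    moreover have "q * dist (fst (p n)) (snd (p n)) \<le> q * (q^n * R)"
      using Suc q by (intro mult_left_mono) auto
    ultimately show ?case by simp
  qed
  define z where "z n = fst (p n)" for n
  have sndp: "snd (p n) = z (Suc n)" for n by (simp add: z_def p_def g_def)
  have zT: "z (Suc n) \<in> T (z n)" for n using inv[of n] by (simp add: sndp z_def)
  have zd: "dist (z n) (z (Suc n)) \<le> R * q^n" for n using inv[of n] by (simp add: sndp z_def mult.commute)
  have "Cauchy z" using geo_cauchy[OF q(1) q(2) zd] .
  then obtain v where v: "z \<longlonglongrightarrow> v" using Cauchy_convergent_iff convergent_def by blast
  have b1: "infdist (z (Suc n)) (T v) \<le> dist (z n) v" for n
  proof (cases "z n = v")
    case True then show ?thesis using zT[of n] by simp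
  next
    case False
    have "infdist (z (Suc n)) (T v) \<le> hausdorff_metric (T (z n)) (T v)"
      using infdist_le_haus[OF zT[of n]] CB by blast
    also have "\<dots> \<le> \<eta> (dist (z n) v)" by (rule contr)
    also have "\<dots> \<le> dist (z n) v" using eta_less[of "dist (z n) v"] False by simp
    finally show ?thesis .
  qed
  have b2: "infdist v (T v) \<le> dist (z n) v + dist (z (Suc n)) v" for n
    using infdist_triangle[of v "T v" "z (Suc n)"] b1[of n] by (simp add: dist_commute)
  have l1: "(\<lambda>n. dist (z n) v) \<longlonglongrightarrow> 0" using v tendsto_dist_iff by blast
  have l2: "(\<lambda>n. dist (z (Suc n)) v) \<longlonglongrightarrow> 0" using LIMSEQ_Suc[OF l1] .
  have "(\<lambda>n. dist (z n) v + dist (z (Suc n)) v) \<longlonglongrightarrow> 0 + 0" by (intro tendsto_add l1 l2)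
  then have "infdist v (T v) \<le> 0"
    using b2 LIMSEQ_le_const[of "\<lambda>n. dist (z n) v + dist (z (Suc n)) v" "0 + 0" "infdist v (T v)"] by auto
  then have "infdist v (T v) = 0" using infdist_nonneg[of v "T v"] by simp
  then have "v \<in> T v" using in_closed_iff_infdist_zero[of "T v" v] CB by blast
  with nofix show False by blast
qed

end
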